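(* Let $b^*\in\{0,1\}^{\mathbb N}$, let $n\ge36$, and let $X^{(1)},\dots,X^{(n)}$ be i.i.d. with law $\mathrm{Prod}(q^{(b^* )})$. Let $\hat q_m=\frac1n\sum_{k=1}^nX^{(k)}_m$ and, for $b\in\{0,1\}^{\mathbb N}$, $\phi_n(b)=\liminf_{d\to\infty}\frac1d\sum_{j=1}^{d}\hat q_{v_j(b)}$. Then almost surely $\phi_n(b^* )=\tfrac23$ and $\phi_n(b)\le\tfrac12$ for every $b\in\{0,1\}^{\mathbb N}$ with $b\ne b^*$.
   Context: Index the nodes of an infinite complete binary tree by $\mathbb N$ in level order: the root is $1$, and node $m$ has left child $2m$ and right child $2m+1$. For $b=(b_1,b_2,\dots)\in\{0,1\}^{\mathbb N}$, $v_0(b)=1$ and $v_j(b)=2v_{j-1}(b)+b_j$ for $j\ge1$. $q^{(b)}\in[0,1]^{\mathbb N}$ is given by $q^{(b)}_m=\tfrac23$ if $m=v_j(b)$ for some $j\ge0$ and $q^{(b)}_m=\tfrac13$ otherwise. $\mathrm{Prod}(q)$ is the product measure on $\{0,1\}^{\mathbb N}$ with independent coordinates $X_m\sim\mathrm{Bernoulli}(q_m)$. *)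

theory Defs
  imports "HOL-Probability.Probability"
begin

text \<open>Path in the tree determined by b. The paper's sequence (b_1,b_2,...) is
represented by b :: nat => bool with b j standing for b_(j+1).\<close>
fun vtx :: "(nat \<Rightarrow> bool) \<Rightarrow> nat \<Rightarrow> nat" where
  "vtx b 0 = 1"
| "vtx b (Suc j) = 2 * vtx b j + (if b j then 1 else 0)"

definition qb :: "(nat \<Rightarrow> bool) \<Rightarrow> nat \<Rightarrow> real" where
  "qb b m = (if \<exists>j. m = vtx b j then 2/3 else 1/3)"

text \<open>Product of independent Bernoulli(q_m) coordinates (coordinate 0 is an unused dummy).\<close>
definition Prod :: "(nat \<Rightarrow> real) \<Rightarrow> (nat \<Rightarrow> bool) measure" where
  "Prod q = PiM UNIV (\<lambda>m. measure_pmf (bernoulli_pmf (q m)))"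

definition qhat :: "nat \<Rightarrow> (nat \<Rightarrow> 'a \<Rightarrow> nat \<Rightarrow> bool) \<Rightarrow> 'a \<Rightarrow> nat \<Rightarrow> real" where
  "qhat n X \<omega> m = (1 / real n) * (\<Sum>k=1..n. of_bool (X k \<omega> m))"

definition phi :: "nat \<Rightarrow> (nat \<Rightarrow> 'a \<Rightarrow> nat \<Rightarrow> bool) \<Rightarrow> 'a \<Rightarrow> (nat \<Rightarrow> bool) \<Rightarrow> ereal" where
  "phi n X \<omega> b = liminf (\<lambda>d. ereal ((1 / real d) * (\<Sum>j=1..d. qhat n X \<omega> (vtx b j))))"

end

theory Submission
  imports Defs
begin


fun w :: "nat \<Rightarrow> (nat \<Rightarrow> bool) \<Rightarrow> nat \<Rightarrow> nat" where
  "w r c 0 = r"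
| "w r c (Suc t) = 2 * w r c t + (if c t then 1 else 0)"

lemma vtx_w: "vtx b (s + t) = w (vtx b s) (\<lambda>i. b (s + i)) t"
  by (induction t) auto

lemma w_div: "w r c t div 2 ^ t = r"
proof (induction t)
  case (Suc t)
  have "w r c (Suc t) div 2 ^ Suc t = (w r c (Suc t) div 2) div 2 ^ t"
    by (simp add: div_mult2_eq mult.commute)
  also have "w r c (Suc t) div 2 = w r c t" by simp
  finally show ?case using Suc by simp
qed simp

lemma w_ge: "r * 2 ^ t \<le> w r c t"
  by (induction t) auto

lemma vtx_bounds: "2 ^ j \<le> vtx b j \<and> vtx b j < 2 ^ Suc j"
  by (induction j) auto

lemma w_mono: "r \<ge> 1 \<Longrightarrow> strict_mono (w r c)"
proof (rule strict_mono_Suc_iff[THEN iffD2], intro allI)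
  fix t assume "r \<ge> 1"
  then have "1 \<le> w r c t" using w_ge[of r t c] by (metis le_trans mult_le_mono one_le_numeral one_le_power nat_mult_1)
  then show "w r c t < w r c (Suc t)" by simp
qed

lemma w_cong: "(\<And>i. i < t \<Longrightarrow> c i = c' i) \<Longrightarrow> w r c t = w r c' t"
  by (induction t) auto

lemma offpath:
  assumes r: "r \<ge> 1" "r \<notin> range (vtx bs)"
  shows "w r c t \<notin> range (vtx bs)"
proof
  assume "w r c t \<in> range (vtx bs)"
  then obtain i where i: "w r c t = vtx bs i" by auto
  show False
  proof (cases "t \<le> i")
    case True
    have "vtx bs i = w (vtx bs (i - t)) (\<lambda>j. bs (i - t + j)) t"
      using vtx_w[of bs "i - t" t] True by simp
    then have "vtx bs i div 2 ^ t = vtx bs (i - t)" by (simp add: w_div)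
    moreover have "vtx bs i div 2 ^ t = r" using i[symmetric] by (simp add: w_div)
    ultimately show False using r by auto
  next
    case False
    have "vtx bs i < 2 ^ Suc i" using vtx_bounds by blast
    also have "(2::nat) ^ Suc i \<le> 2 ^ t" using False by (intro power_increasing) auto
    also have "2 ^ t \<le> r * 2 ^ t" using r by simp
    also have "\<dots> \<le> w r c t" by (rule w_ge)
    finally show False using i by simp
  qed
qed

lemma diverge:
  assumes "b j0 \<noteq> bs j0"
  shows "vtx b (Suc j0) \<notin> range (vtx bs)"
proof
  assume "vtx b (Suc j0) \<in> range (vtx bs)"
  then obtain i where i: "vtx b (Suc j0) = vtx bs i" by auto
  have a: "(2::nat) ^ Suc j0 < 2 ^ Suc i"
    using vtx_bounds[of "Suc j0" b] vtx_bounds[of i bs] i by linarith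
  have b: "(2::nat) ^ i < 2 ^ Suc (Suc j0)"
    using vtx_bounds[of "Suc j0" b] vtx_bounds[of i bs] i by linarith
  have "Suc j0 < Suc i" using a by (simp only: power_strict_increasing_iff[of 2] one_less_numeral_iff semiring_norm(76))
  moreover have "i < Suc (Suc j0)" using b by (simp only: power_strict_increasing_iff[of 2] one_less_numeral_iff semiring_norm(76))
  ultimately have "i = Suc j0" by simp
  with i have "vtx b (Suc j0) mod 2 = vtx bs (Suc j0) mod 2" by simp
  then show False using assms by (auto split: if_splits)
qed

lemma sum_split: "(\<Sum>j<s + L. g j) = (\<Sum>j<s. g j) + (\<Sum>t<L. g (s + t))" for g :: "nat \<Rightarrow> real"
  by (induction L) auto



locale setting = prob_space M for M :: "'a measure" +
  fixes X :: "nat \<Rightarrow> 'a \<Rightarrow> nat \<Rightarrow> bool" and q :: "nat \<Rightarrow> real" and n :: nat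
  assumes Xm: "\<And>k. k \<in> {1..n} \<Longrightarrow> X k \<in> measurable M (Prod q)"
  and Xi: "indep_vars (\<lambda>_. Prod q) X {1..n}"
  and Xd: "\<And>k. k \<in> {1..n} \<Longrightarrow> distr M (Prod q) (X k) = Prod q"
  and n1: "n \<ge> 1"
  and q01: "\<And>m. 0 \<le> q m \<and> q m \<le> 1"
begin

abbreviation B :: "nat \<Rightarrow> bool measure" where "B m \<equiv> measure_pmf (bernoulli_pmf (q m))"

lemma Z_rv: "k \<in> {1..n} \<Longrightarrow> (\<lambda>\<omega>. X k \<omega> m) \<in> measurable M (B m)"
  using measurable_compose[OF Xm[unfolded Prod_def] measurable_component_singleton[of m UNIV]]
  by (simp add: comp_def)

lemma Z_distr: "k \<in> {1..n} \<Longrightarrow> distr M (B m) (\<lambda>\<omega>. X k \<omega> m) = B m"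
proof -
  assume k: "k \<in> {1..n}"
  have "distr M (B m) (\<lambda>\<omega>. X k \<omega> m) = distr M (B m) ((\<lambda>f. f m) \<circ> X k)" by (simp add: comp_def)
  also have "\<dots> = distr (distr M (Prod q) (X k)) (B m) (\<lambda>f. f m)"
    by (rule distr_distr[symmetric]) (use Xm[OF k] in \<open>auto simp: Prod_def\<close>)
  also have "\<dots> = distr (Prod q) (B m) (\<lambda>f. f m)" using Xd[OF k] by simp
  also have "\<dots> = B m" unfolding Prod_def
    by (rule distr_PiM_component) (auto intro: prob_space_measure_pmf)
  finally show ?thesis .
qed

lemma indep_Z:
  assumes V: "finite V" "V \<noteq> {}"
  shows "indep_vars (\<lambda>i. B (snd i)) (\<lambda>i \<omega>. X (fst i) \<omega> (snd i)) ({1..n} \<times> V)"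
proof -
  let ?I = "{1..n} \<times> V"
  let ?Z = "\<lambda>i \<omega>. X (fst i) \<omega> (snd i)"
  let ?B = "\<lambda>i. B (snd i)"
  have I: "?I \<noteq> {}" "finite ?I" using V n1 by auto
  have rv: "\<And>i. i \<in> ?I \<Longrightarrow> random_variable (?B i) (?Z i)" using Z_rv by auto
  interpret PB: product_prob_space ?B by (intro product_prob_spaceI) (auto intro: prob_space_measure_pmf)
  have R: "(\<Pi>\<^sub>M i\<in>?I. distr M (?B i) (?Z i)) = (\<Pi>\<^sub>M i\<in>?I. ?B i)"
    by (intro PiM_cong) (auto simp: Z_distr)
  have Xrv: "\<And>k. k \<in> {1..n} \<Longrightarrow> random_variable (Prod q) (X k)" using Xm by auto
  show ?thesis
  proof (subst indep_vars_iff_distr_eq_PiM'[OF I(1) rv], assumption, unfold R)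
    show "distr M (\<Pi>\<^sub>M i\<in>?I. ?B i) (\<lambda>x. \<lambda>i\<in>?I. ?Z i x) = (\<Pi>\<^sub>M i\<in>?I. ?B i)"
    proof (rule PB.PiM_eqI[OF I(2)])
      show "sets (distr M (\<Pi>\<^sub>M i\<in>?I. ?B i) (\<lambda>x. \<lambda>i\<in>?I. ?Z i x)) = sets (\<Pi>\<^sub>M i\<in>?I. ?B i)" by simp
    next
      fix A assume A: "\<And>i. i \<in> ?I \<Longrightarrow> A i \<in> sets (?B i)"
      have mZ: "(\<lambda>x. \<lambda>i\<in>?I. ?Z i x) \<in> measurable M (\<Pi>\<^sub>M i\<in>?I. ?B i)"
        by (intro measurable_restrict) (use rv in auto)
      define E where "E k = prod_emb UNIV B V (Pi\<^sub>E V (\<lambda>m. A (k, m)))" for k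
      have Esets: "E k \<in> sets (Prod q)" if "k \<in> {1..n}" for k
        unfolding E_def Prod_def using A that V by (intro sets_PiM_I) auto
      have pre: "(\<lambda>x. \<lambda>i\<in>?I. ?Z i x) -` Pi\<^sub>E ?I A \<inter> space M = (\<Inter>k\<in>{1..n}. X k -` E k \<inter> space M)"
        using n1 by (auto simp: E_def prod_emb_def PiE_iff space_PiM)
      have "emeasure (distr M (\<Pi>\<^sub>M i\<in>?I. ?B i) (\<lambda>x. \<lambda>i\<in>?I. ?Z i x)) (Pi\<^sub>E ?I A)
          = emeasure M ((\<lambda>x. \<lambda>i\<in>?I. ?Z i x) -` Pi\<^sub>E ?I A \<inter> space M)"
        using A I by (intro emeasure_distr[OF mZ]) (auto intro!: sets_PiM_I_finite)
      also have "\<dots> = emeasure M (\<Inter>k\<in>{1..n}. X k -` E k \<inter> space M)"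
        by (simp only: pre)
      also have "\<dots> = ennreal (\<Prod>k\<in>{1..n}. prob (X k -` E k \<inter> space M))"
        using indep_varsD[OF Xi, of "{1..n}" E] Esets n1 by (simp add: emeasure_eq_measure)
      also have "\<dots> = (\<Prod>k\<in>{1..n}. emeasure (Prod q) (E k))"
      proof -
        have e: "prob (X k -` E k \<inter> space M) = measure (Prod q) (E k)" if "k \<in> {1..n}" for k
          using measure_distr[OF Xrv[OF that] Esets[OF that]] Xd[OF that] by simp
        have PP: "prob_space (Prod q)" using prob_space_distr[OF Xrv, of 1] Xd[of 1] n1 by simp
        show ?thesis
          by (simp add: e prod_ennreal[symmetric] finite_measure.emeasure_eq_measure[OF prob_space.finite_measure[OF PP]])
      qed
      also have "\<dots> = (\<Prod>k\<in>{1..n}. \<Prod>m\<in>V. emeasure (B m) (A (k, m)))"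
        unfolding E_def Prod_def using V
        by (intro prod.cong refl emeasure_PiM_emb) (auto intro: prob_space_measure_pmf)
      also have "\<dots> = (\<Prod>i\<in>?I. emeasure (?B i) (A i))"
        by (simp add: prod.cartesian_product split_beta)
      finally show "emeasure (distr M (\<Pi>\<^sub>M i\<in>?I. ?B i) (\<lambda>x. \<lambda>i\<in>?I. ?Z i x)) (Pi\<^sub>E ?I A) = (\<Prod>i\<in>?I. emeasure (?B i) (A i))" .
    qed
  qed
qed


definition Y :: "nat \<times> nat \<Rightarrow> 'a \<Rightarrow> real" where
  "Y i \<omega> = of_bool (X (fst i) \<omega> (snd i))"

lemma indep_Y:
  assumes V: "finite V" "V \<noteq> {}"
  shows "indep_vars (\<lambda>_. borel) Y ({1..n} \<times> V)"
  unfolding Y_def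
  by (rule indep_vars_compose2[OF indep_Z[OF V], where Y="\<lambda>_. of_bool"]) simp

lemma Yeq: "Y (k, m) = (\<lambda>\<omega>. of_bool (X k \<omega> m))"
  by (simp add: fun_eq_iff Y_def)

lemma Y_rv: "k \<in> {1..n} \<Longrightarrow> Y (k, m) \<in> borel_measurable M"
  unfolding Yeq by (rule measurable_compose[OF Z_rv]) simp_all

lemma Y_exp: "k \<in> {1..n} \<Longrightarrow> expectation (Y (k, m)) = q m"
proof -
  assume k: "k \<in> {1..n}"
  have "expectation (Y (k, m)) = integral\<^sup>L (distr M (B m) (\<lambda>\<omega>. X k \<omega> m)) (of_bool :: bool \<Rightarrow> real)"
    by (subst integral_distr[OF Z_rv[OF k]]) (auto simp: Yeq)
  also have "\<dots> = q m" unfolding Z_distr[OF k] using q01[of m] by simp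
  finally show ?thesis .
qed

lemma qhat_sum: "(\<Sum>m\<in>V. qhat n X \<omega> m) = (1 / real n) * (\<Sum>i\<in>{1..n} \<times> V. Y i \<omega>)"
proof -
  have "(\<Sum>m\<in>V. qhat n X \<omega> m) = (1 / real n) * (\<Sum>m\<in>V. \<Sum>k=1..n. Y (k, m) \<omega>)"
    unfolding qhat_def Y_def by (simp add: sum_distrib_left)
  also have "\<dots> = (1 / real n) * (\<Sum>k=1..n. \<Sum>m\<in>V. Y (k, m) \<omega>)"
    by (subst sum.swap) (rule refl)
  also have "\<dots> = (1 / real n) * (\<Sum>i\<in>{1..n} \<times> V. Y i \<omega>)"
    by (simp add: sum.cartesian_product)
  finally show ?thesis .
qed

lemma hoeff:
  fixes p \<epsilon> :: real
  assumes V: "finite V" "V \<noteq> {}" and p: "\<And>m. m \<in> V \<Longrightarrow> q m = p" and e: "\<epsilon> \<ge> 0"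
  shows "prob {\<omega> \<in> space M. (\<Sum>m\<in>V. qhat n X \<omega> m) \<ge> card V * p + \<epsilon>} \<le> exp (-2 * n * \<epsilon>\<^sup>2 / card V)"
    and "prob {\<omega> \<in> space M. (\<Sum>m\<in>V. qhat n X \<omega> m) \<le> card V * p - \<epsilon>} \<le> exp (-2 * n * \<epsilon>\<^sup>2 / card V)"
proof -
  let ?I = "{1..n} \<times> V"
  interpret H: Hoeffding_ineq M ?I Y "\<lambda>_. 0" "\<lambda>_. 1" "\<Sum>i\<in>?I. expectation (Y i)"
  proof unfold_locales
    show "finite ?I" using V by auto
    show "indep_vars (\<lambda>_. borel) Y ?I" by (rule indep_Y[OF V])
    fix i assume "i \<in> ?I"
    show "AE x in M. Y i x \<in> {0..1}" by (auto simp: Y_def)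
  qed simp
  have mu: "(\<Sum>i\<in>?I. expectation (Y i)) = n * card V * p"
  proof -
    have "(\<Sum>i\<in>?I. expectation (Y i)) = (\<Sum>k=1..n. \<Sum>m\<in>V. expectation (Y (k, m)))"
      by (simp add: sum.cartesian_product)
    also have "\<dots> = (\<Sum>k=1..n. \<Sum>m\<in>V. p)"
      by (intro sum.cong refl) (simp add: Y_exp p)
    finally show ?thesis by simp
  qed
  have cI: "(\<Sum>i\<in>?I. (1 - 0)\<^sup>2) = real n * card V" by (simp add: card_cartesian_product)
  have pos: "(\<Sum>i\<in>?I. (1 - (0::real))\<^sup>2) > 0" unfolding cI using V n1 by (simp add: card_gt_0_iff)
  have ne: "n * \<epsilon> \<ge> 0" using e by simp
  have ex: "exp (- 2 * (n * \<epsilon>)\<^sup>2 / (real n * card V)) = exp (-2 * n * \<epsilon>\<^sup>2 / card V)"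
    using n1 by (simp add: power2_eq_square field_simps)
  have n0: "real n > 0" using n1 by simp
  have s1: "{\<omega> \<in> space M. (\<Sum>m\<in>V. qhat n X \<omega> m) \<ge> card V * p + \<epsilon>}
     = {\<omega> \<in> space M. (\<Sum>i\<in>?I. Y i \<omega>) \<ge> n * card V * p + n * \<epsilon>}"
    using n0 by (auto simp: qhat_sum field_simps)
  have s2: "{\<omega> \<in> space M. (\<Sum>m\<in>V. qhat n X \<omega> m) \<le> card V * p - \<epsilon>}
     = {\<omega> \<in> space M. (\<Sum>i\<in>?I. Y i \<omega>) \<le> n * card V * p - n * \<epsilon>}"
    using n0 by (auto simp: qhat_sum field_simps)
  show "prob {\<omega> \<in> space M. (\<Sum>m\<in>V. qhat n X \<omega> m) \<ge> card V * p + \<epsilon>} \<le> exp (-2 * n * \<epsilon>\<^sup>2 / card V)"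
    using H.Hoeffding_ineq_ge[OF ne pos] unfolding s1 mu cI ex .
  show "prob {\<omega> \<in> space M. (\<Sum>m\<in>V. qhat n X \<omega> m) \<le> card V * p - \<epsilon>} \<le> exp (-2 * n * \<epsilon>\<^sup>2 / card V)"
    using H.Hoeffding_ineq_le[OF ne pos] unfolding s2 mu cI ex .
qed


lemma qhat_meas: "(\<lambda>\<omega>. qhat n X \<omega> m) \<in> borel_measurable M"
proof -
  have "(\<lambda>\<omega>. qhat n X \<omega> m) = (\<lambda>\<omega>. (1 / real n) * (\<Sum>k\<in>{1..n}. Y (k, m) \<omega>))"
    by (simp add: fun_eq_iff qhat_def Y_def)
  also have "\<dots> \<in> borel_measurable M"
    by (intro borel_measurable_times borel_measurable_const borel_measurable_sum Y_rv)
  finally show ?thesis .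
qed

lemma qhat_01: "0 \<le> qhat n X \<omega> m \<and> qhat n X \<omega> m \<le> 1"
proof -
  have "(\<Sum>k=1..n. of_bool (X k \<omega> m)) \<le> real (card {1..n}) * 1"
    by (intro sum_bounded_above) auto
  then show ?thesis using n1 by (auto simp: qhat_def intro!: sum_nonneg)
qed

lemma BC:
  assumes [measurable]: "\<And>d. A d \<in> sets M" and b: "\<And>d. prob (A d) \<le> C * r ^ d" and r: "0 \<le> r" "r < 1"
  shows "AE \<omega> in M. eventually (\<lambda>d. \<omega> \<notin> A d) sequentially"
proof -
  have "summable (\<lambda>d. C * r ^ d)" using r by (intro summable_mult summable_geometric) auto
  then have "summable (\<lambda>d. measure M (A d))"
    by (rule summable_comparison_test[rotated]) (use b in auto)
  then have "AE x in M. eventually (\<lambda>d. x \<in> space M - A d) sequentially"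
    by (intro borel_cantelli_AE1) (auto simp: emeasure_eq_measure)
  then show ?thesis by (auto elim!: eventually_mono)
qed

end

lemma sum_shift1: "(\<Sum>j=1..Suc d. g j) = (\<Sum>t<Suc d. g (Suc t))" for g :: "nat \<Rightarrow> real"
  by (induction d) auto

locale setting2 = setting M X "qb bs" n for M :: "'a measure" and X n bs +
  assumes n36: "n \<ge> 36"
begin

lemma partA: "AE \<omega> in M. ((\<lambda>d. (1 / real d) * (\<Sum>j=1..d. qhat n X \<omega> (vtx bs j))) \<longlonglongrightarrow> 2/3)"
proof -
  define r0 where "r0 = vtx bs 1"
  define c0 where "c0 = (\<lambda>i. bs (1 + i))"
  define V where "V d = w r0 c0 ` {..<Suc d}" for d
  have r0: "r0 \<ge> 1" unfolding r0_def using vtx_bounds[of 1 bs] by simp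
  have inj: "inj (w r0 c0)" using w_mono[OF r0] strict_mono_imp_inj_on by blast
  have wv: "w r0 c0 t = vtx bs (Suc t)" for t using vtx_w[of bs 1 t] by (simp add: r0_def c0_def)
  have cardV: "card (V d) = Suc d" for d unfolding V_def by (subst card_image) (auto intro: inj_on_subset[OF inj])
  have finV: "finite (V d)" "V d \<noteq> {}" for d unfolding V_def by auto
  have qV: "qb bs m = 2/3" if "m \<in> V d" for m d proof -
    from that obtain t where "m = vtx bs (Suc t)" unfolding V_def by (auto simp: wv simp del: vtx.simps)
    then have "\<exists>j. m = vtx bs j" by blast
    then show ?thesis unfolding qb_def by (simp only: if_True)
  qed
  have sumeq: "(\<Sum>j=1..Suc d. qhat n X \<omega> (vtx bs j)) = (\<Sum>m\<in>V d. qhat n X \<omega> m)" for d \<omega>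
    unfolding V_def sum_shift1 by (subst sum.reindex) (auto intro: inj_on_subset[OF inj] simp: wv)
  define A where "A i d = {\<omega> \<in> space M. (\<Sum>m\<in>V d. qhat n X \<omega> m) \<ge> card (V d) * (2/3) + card (V d) / (Suc i)}
     \<union> {\<omega> \<in> space M. (\<Sum>m\<in>V d. qhat n X \<omega> m) \<le> card (V d) * (2/3) - card (V d) / (Suc i)}" for i d
  have Ameas: "A i d \<in> sets M" for i d
  proof -
    have [measurable]: "(\<lambda>\<omega>. qhat n X \<omega> m) \<in> borel_measurable M" for m by (rule qhat_meas)
    show ?thesis unfolding A_def by measurable
  qed
  have AE1: "AE \<omega> in M. eventually (\<lambda>d. \<omega> \<notin> A i d) sequentially" for i
  proof (rule BC[OF Ameas])
    let ?r = "exp (- 2 / (Suc i)\<^sup>2)"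
    show "0 \<le> ?r" "?r < 1" by auto
    fix d
    have e0: "(0::real) \<le> card (V d) / (Suc i)" by simp
    let ?E = "exp (-2 * n * (card (V d) / (Suc i))\<^sup>2 / card (V d))"
    let ?S1 = "{\<omega> \<in> space M. (\<Sum>m\<in>V d. qhat n X \<omega> m) \<ge> card (V d) * (2/3) + card (V d) / (Suc i)}"
    let ?S2 = "{\<omega> \<in> space M. (\<Sum>m\<in>V d. qhat n X \<omega> m) \<le> card (V d) * (2/3) - card (V d) / (Suc i)}"
    have [measurable]: "(\<lambda>\<omega>. qhat n X \<omega> m) \<in> borel_measurable M" for m by (rule qhat_meas)
    have S: "?S1 \<in> sets M" "?S2 \<in> sets M" by measurable
    have "prob (A i d) = prob (?S1 \<union> ?S2)" by (simp add: A_def)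
    also have "\<dots> \<le> prob ?S1 + prob ?S2" by (rule measure_Un_le[OF S])
    also have "\<dots> \<le> ?E + ?E" by (rule add_mono; rule hoeff[OF finV qV e0])
    also have "?E \<le> ?r ^ d"
    proof -
      define D where "D = real (Suc d)"
      define k where "k = (real (Suc i))\<^sup>2"
      have D: "D > 0" and k: "k > 0" by (auto simp: D_def k_def)
      have cD: "real (card (V d)) = D" by (simp add: cardV D_def)
      have eq: "-2 * n * (card (V d) / (Suc i))\<^sup>2 / card (V d) = - (2 * (n * D)) / k"
        unfolding cD k_def using D by (simp add: power_divide power2_eq_square)
      moreover have "real d \<le> D" by (simp add: D_def)
      moreover have "D \<le> n * D" using n1 D by simp
      ultimately have "real d \<le> n * D" by linarith
      then have "2 * real d / k \<le> (2 * (n * D)) / k"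
        using k by (intro divide_right_mono) auto
      then have le: "- (2 * (n * D)) / k \<le> real d * (- 2 / k)" by (simp add: mult.commute)
      have r: "?r ^ d = exp (real d * (- 2 / k))" unfolding k_def by (simp add: exp_of_nat_mult[symmetric])
      show ?thesis unfolding r eq using le by simp
    qed
    finally show "prob (A i d) \<le> 2 * ?r ^ d" by simp
  qed
  have "AE \<omega> in M. \<forall>i. eventually (\<lambda>d. \<omega> \<notin> A i d) sequentially"
    using AE1 by (simp add: AE_all_countable)
  then show ?thesis using AE_space
  proof eventually_elim
    case (elim \<omega>)
    let ?a = "\<lambda>d. (1 / real d) * (\<Sum>j=1..d. qhat n X \<omega> (vtx bs j))"
    have "(\<lambda>d. ?a (Suc d)) \<longlonglongrightarrow> 2/3"
      unfolding LIMSEQ_iff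
    proof (intro allI impI)
      fix e :: real assume "0 < e"
      then obtain i where i: "inverse (real (Suc i)) < e" using reals_Archimedean by blast
      from elim(1) have "eventually (\<lambda>d. \<omega> \<notin> A i d) sequentially" by blast
      then obtain N where N: "\<And>d. d \<ge> N \<Longrightarrow> \<omega> \<notin> A i d" by (auto simp: eventually_sequentially)
      show "\<exists>no. \<forall>d\<ge>no. norm (?a (Suc d) - 2/3) < e"
      proof (intro exI allI impI)
        fix d assume "d \<ge> N"
        then have "\<omega> \<notin> A i d" by (rule N)
        define S where "S = (\<Sum>m\<in>V d. qhat n X \<omega> m)"
        define D where "D = real (Suc d)"
        have cD: "real (card (V d)) = D" by (simp add: cardV D_def)
        have nn: "\<not> (S \<ge> D * (2/3) + D / Suc i)" "\<not> (S \<le> D * (2/3) - D / Suc i)"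
          using \<open>\<omega> \<notin> A i d\<close> elim(2) unfolding A_def cD[symmetric] S_def by blast+
        have D0: "D > 0" by (simp add: D_def)
        have "\<bar>S - D * (2/3)\<bar> < D / Suc i" using nn by (simp only: abs_less_iff not_le) linarith
        then have "\<bar>S - D * (2/3)\<bar> / D < (D / Suc i) / D" using D0 by (rule divide_strict_right_mono)
        moreover have "\<bar>S - D * (2/3)\<bar> / D = \<bar>?a (Suc d) - 2/3\<bar>"
          using D0 unfolding sumeq S_def[symmetric] D_def[symmetric] by (simp add: field_simps)
        moreover have "(D / Suc i) / D = 1 / Suc i" using D0 by simp
        ultimately have "\<bar>?a (Suc d) - 2/3\<bar> < 1 / Suc i" by simp
        then show "norm (?a (Suc d) - 2/3) < e" using i by (simp add: inverse_eq_divide)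
      qed
    qed
    then show ?case by (rule LIMSEQ_imp_Suc)
  qed
qed


lemma partB: "AE \<omega> in M. \<forall>b. b \<noteq> bs \<longrightarrow>
    liminf (\<lambda>d. ereal ((1 / real d) * (\<Sum>j=1..d. qhat n X \<omega> (vtx b j)))) \<le> ereal (1/2)"
proof -
  define cl where "cl xs = (\<lambda>i. i < length xs \<and> xs ! i)" for xs :: "bool list"
  define L where "L d = {xs :: bool list. set xs \<subseteq> UNIV \<and> length xs = Suc d}" for d
  define W where "W r xs d = w r (cl xs) ` {..<Suc d}" for r xs d
  define Bad where "Bad r d = (\<Union>xs\<in>L d. {\<omega> \<in> space M. (\<Sum>m\<in>W r xs d. qhat n X \<omega> m) \<ge> card (W r xs d) * (1/3) + card (W r xs d) / 6})" for r d
  have finL: "finite (L d)" for d unfolding L_def by (rule finite_lists_length_eq) simp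
  have cardL: "card (L d) = 2 ^ Suc d" for d unfolding L_def by (subst card_lists_length_eq) simp_all
  have [measurable]: "(\<lambda>\<omega>. qhat n X \<omega> m) \<in> borel_measurable M" for m by (rule qhat_meas)
  have Smeas: "{\<omega> \<in> space M. (\<Sum>m\<in>W r xs d. qhat n X \<omega> m) \<ge> card (W r xs d) * (1/3) + card (W r xs d) / 6} \<in> sets M" for r xs d
    by measurable
  have Bmeas: "Bad r d \<in> sets M" for r d
    unfolding Bad_def using finL Smeas by (intro sets.finite_UN) auto
  have AEr: "AE \<omega> in M. eventually (\<lambda>d. \<omega> \<notin> Bad r d) sequentially"
    if r: "r \<ge> 1" "r \<notin> range (vtx bs)" for r
  proof (rule BC[OF Bmeas])
    let ?r = "2 * exp (-2::real)"
    have "exp (2::real) \<ge> 1 + 2" by (rule exp_ge_add_one_self)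
    then have e2: "exp (-2::real) \<le> 1/3" by (simp add: exp_minus field_simps)
    then show "0 \<le> ?r" "?r < 1" by auto
    fix d
    define D where "D = real (Suc d)"
    have inj: "inj (w r c)" for c using w_mono[OF r(1)] strict_mono_imp_inj_on by blast
    have cW: "real (card (W r xs d)) = D" for xs
      unfolding W_def D_def by (subst card_image) (auto intro: inj_on_subset[OF inj])
    have fW: "finite (W r xs d)" "W r xs d \<noteq> {}" for xs unfolding W_def by auto
    have qW: "qb bs m = 1/3" if "m \<in> W r xs d" for m xs
    proof -
      from that obtain t where "m = w r (cl xs) t" unfolding W_def by auto
      then have "m \<notin> range (vtx bs)" using offpath[OF r] by simp
      then have "\<not> (\<exists>j. m = vtx bs j)" by auto
      then show ?thesis unfolding qb_def by (simp only: if_False)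
    qed
    have e0: "(0::real) \<le> D / 6" by (simp add: D_def)
    have each: "prob {\<omega> \<in> space M. (\<Sum>m\<in>W r xs d. qhat n X \<omega> m) \<ge> card (W r xs d) * (1/3) + card (W r xs d) / 6}
       \<le> exp (-2 * D)" for xs
    proof -
      have "prob {\<omega> \<in> space M. (\<Sum>m\<in>W r xs d. qhat n X \<omega> m) \<ge> card (W r xs d) * (1/3) + card (W r xs d) / 6}
         \<le> exp (-2 * n * (D / 6)\<^sup>2 / card (W r xs d))"
        using hoeff(1)[OF fW(1)[of xs] fW(2)[of xs] qW[of _ xs] e0] unfolding cW .
      also have "-2 * n * (D / 6)\<^sup>2 / card (W r xs d) = - (real n * D / 18)"
        unfolding cW using e0 by (simp add: power2_eq_square)
      also have "- (real n * D / 18) \<le> -2 * D"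
      proof -
        have "36 * D \<le> real n * D" using n36 e0 by (intro mult_right_mono) auto
        then show ?thesis by simp
      qed
      finally show ?thesis by simp
    qed
    have "prob (Bad r d) \<le> (\<Sum>xs\<in>L d. prob {\<omega> \<in> space M. (\<Sum>m\<in>W r xs d. qhat n X \<omega> m) \<ge> card (W r xs d) * (1/3) + card (W r xs d) / 6})"
      unfolding Bad_def using finL Smeas by (intro finite_measure_subadditive_finite) auto
    also have "\<dots> \<le> (\<Sum>xs\<in>L d. exp (-2 * D))" by (intro sum_mono each)
    also have "\<dots> = 2 ^ Suc d * exp (-2 * D)" by (simp add: cardL)
    also have "exp (-2 * D) = exp (-2) ^ Suc d" unfolding D_def by (subst exp_of_nat_mult[symmetric]) (simp add: mult.commute)
    also have "(2::real) ^ Suc d * exp (-2) ^ Suc d = ?r * ?r ^ d" by (simp add: power_mult_distrib)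
    finally show "prob (Bad r d) \<le> ?r * ?r ^ d" .
  qed
  have "AE \<omega> in M. \<forall>r. (r \<ge> 1 \<and> r \<notin> range (vtx bs)) \<longrightarrow> eventually (\<lambda>d. \<omega> \<notin> Bad r d) sequentially"
    unfolding AE_all_countable
  proof
    fix r show "AE \<omega> in M. (r \<ge> 1 \<and> r \<notin> range (vtx bs)) \<longrightarrow> eventually (\<lambda>d. \<omega> \<notin> Bad r d) sequentially"
      by (cases "r \<ge> 1 \<and> r \<notin> range (vtx bs)") (use AEr in auto)
  qed
  then show ?thesis using AE_space
  proof eventually_elim
    case (elim \<omega>)
    show ?case
    proof (intro allI impI)
      fix b assume "b \<noteq> bs"
      then obtain j0 where j0: "b j0 \<noteq> bs j0" by auto
      define s where "s = Suc j0"
      define r where "r = vtx b s"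
      define c where "c = (\<lambda>i. b (s + i))"
      have r1: "r \<ge> 1" unfolding r_def using vtx_bounds[of s b] by (meson le_trans one_le_numeral one_le_power)
      have roff: "r \<notin> range (vtx bs)" unfolding r_def s_def by (rule diverge[of b j0 bs, OF j0])
      obtain N0 where N0: "\<And>d. d \<ge> N0 \<Longrightarrow> \<omega> \<notin> Bad r d"
      proof -
        have "eventually (\<lambda>d. \<omega> \<notin> Bad r d) sequentially" using elim(1) r1 roff by blast
        then show ?thesis using that unfolding eventually_sequentially by blast
      qed
      let ?g = "\<lambda>j. qhat n X \<omega> (vtx b j)"
      have inj: "inj (w r c)" using w_mono[OF r1] strict_mono_imp_inj_on by blast
      have tail: "(\<Sum>t<Suc d. ?g (s + t)) < real (Suc d) / 2" if "d \<ge> N0" for d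
      proof -
        define xs where "xs = map c [0..<Suc d]"
        have xsL: "xs \<in> L d" unfolding xs_def L_def by simp
        have wc: "w r (cl xs) t = w r c t" if "t < Suc d" for t
        proof (rule w_cong)
          fix i assume "i < t"
          then have "i < Suc d" using that by simp
          then show "cl xs i = c i" by (simp add: cl_def xs_def del: upt_Suc)
        qed
        have Weq: "W r xs d = w r c ` {..<Suc d}" unfolding W_def using wc by auto
        have cW: "card (W r xs d) = Suc d" unfolding Weq by (subst card_image) (auto intro: inj_on_subset[OF inj])
        have "\<omega> \<notin> Bad r d" by (rule N0[OF that])
        then have "\<not> ((\<Sum>m\<in>W r xs d. qhat n X \<omega> m) \<ge> card (W r xs d) * (1/3) + card (W r xs d) / 6)"
          unfolding Bad_def using xsL elim(2) by blast
        then have "(\<Sum>m\<in>W r xs d. qhat n X \<omega> m) < real (Suc d) / 2" unfolding cW by simp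
        moreover have "(\<Sum>m\<in>W r xs d. qhat n X \<omega> m) = (\<Sum>t<Suc d. ?g (s + t))"
          unfolding Weq by (subst sum.reindex) (auto intro: inj_on_subset[OF inj] simp: r_def[symmetric] c_def[symmetric] vtx_w)
        ultimately show ?thesis by simp
      qed
      have bound: "(1 / real N) * (\<Sum>j=1..N. ?g j) \<le> 1/2 + (real s + 1) * (1 / real N)" if "N \<ge> s + N0" for N
      proof -
        define d where "d = N - s"
        have dN: "d \<ge> N0" "s + Suc d = Suc N" using that by (auto simp: d_def)
        have N0': "real N > 0" using that s_def by simp
        have "(\<Sum>j=1..N. ?g j) \<le> (\<Sum>j<Suc N. ?g j)"
          by (rule sum_mono2) (auto simp: qhat_01)
        also have "\<dots> = (\<Sum>j<s. ?g j) + (\<Sum>t<Suc d. ?g (s + t))"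
          using sum_split[where s=s and L="Suc d" and g="?g"] dN(2) by simp
        also have "(\<Sum>j<s. ?g j) \<le> real (card {..<s}) * 1"
          by (intro sum_bounded_above) (auto simp: qhat_01)
        also have "(\<Sum>t<Suc d. ?g (s + t)) \<le> real (Suc d) / 2" using tail[OF dN(1)] by simp
        finally have "(\<Sum>j=1..N. ?g j) \<le> real s + real (Suc d) / 2" by simp
        also have "real (Suc d) \<le> real N + 1" using dN(2) by simp
        finally have "(\<Sum>j=1..N. ?g j) \<le> real s + (real N + 1) / 2" by simp
        then have "(1 / real N) * (\<Sum>j=1..N. ?g j) \<le> (1 / real N) * (real s + (real N + 1) / 2)"
          using N0' by (intro mult_left_mono) auto
        also have "\<dots> = 1/2 + (real s + 1/2) * (1 / real N)" using N0' by (simp add: field_simps)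
        also have "\<dots> \<le> 1/2 + (real s + 1) * (1 / real N)" using N0' by (intro add_left_mono mult_right_mono) auto
        finally show ?thesis .
      qed
      have lim: "(\<lambda>N. 1/2 + (real s + 1) * (1 / real N)) \<longlonglongrightarrow> 1/2 + (real s + 1) * 0"
        by (intro tendsto_intros lim_inverse_n')
      have "liminf (\<lambda>N. ereal ((1 / real N) * (\<Sum>j=1..N. ?g j))) \<le> liminf (\<lambda>N. ereal (1/2 + (real s + 1) * (1 / real N)))"
        by (intro Liminf_mono) (use bound in \<open>auto simp: eventually_sequentially\<close>)
      also have "\<dots> = ereal (1/2)"
        by (rule lim_imp_Liminf) (use lim in \<open>auto intro: tendsto_ereal\<close>)
      finally show "liminf (\<lambda>d. ereal ((1 / real d) * (\<Sum>j=1..d. ?g j))) \<le> ereal (1/2)" .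
    qed
  qed
qed

end

theorem mainTheorem8:
  fixes M :: "'a measure" and X :: "nat \<Rightarrow> 'a \<Rightarrow> nat \<Rightarrow> bool"
    and bstar :: "nat \<Rightarrow> bool" and n :: nat
  assumes "prob_space M"
    and "n \<ge> 36"
    and "\<And>k. k \<in> {1..n} \<Longrightarrow> X k \<in> measurable M (Prod (qb bstar))"
    and "prob_space.indep_vars M (\<lambda>_. Prod (qb bstar)) X {1..n}"
    and "\<And>k. k \<in> {1..n} \<Longrightarrow> distr M (Prod (qb bstar)) (X k) = Prod (qb bstar)"
  shows "AE \<omega> in M. phi n X \<omega> bstar = ereal (2/3) \<and>
           (\<forall>b. b \<noteq> bstar \<longrightarrow> phi n X \<omega> b \<le> ereal (1/2))"
proof -
  interpret S: setting2 M X n bstar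
  proof (intro setting2.intro setting.intro setting_axioms.intro setting2_axioms.intro)
    show "prob_space M" by (rule assms(1))
    show "\<And>k. k \<in> {1..n} \<Longrightarrow> X k \<in> measurable M (Prod (qb bstar))" by (rule assms(3))
    show "prob_space.indep_vars M (\<lambda>_. Prod (qb bstar)) X {1..n}" by (rule assms(4))
    show "\<And>k. k \<in> {1..n} \<Longrightarrow> distr M (Prod (qb bstar)) (X k) = Prod (qb bstar)" by (rule assms(5))
    show "n \<ge> 1" using assms(2) by simp
    show "\<And>m. 0 \<le> qb bstar m \<and> qb bstar m \<le> 1" by (simp add: qb_def)
    show "n \<ge> 36" by (rule assms(2))
  qed
  have "AE \<omega> in M. phi n X \<omega> bstar = ereal (2/3)"
    using S.partA
  proof eventually_elim
    case (elim \<omega>)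
    show ?case unfolding phi_def
      by (rule lim_imp_Liminf) (use elim in \<open>auto intro: tendsto_ereal\<close>)
  qed
  moreover have "AE \<omega> in M. \<forall>b. b \<noteq> bstar \<longrightarrow> phi n X \<omega> b \<le> ereal (1/2)"
    using S.partB unfolding phi_def .
  ultimately show ?thesis by eventually_elim blast
qed

end
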